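(* Let $p$ be an odd prime, $q$ a power of $p$, and $n$ a nonnegative even integer with $p\nmid n$. If $F_n(1,x)$ is a permutation polynomial of $\mathbb{F}_q$, then $n\equiv 0\pmod 4$ and $\gcd\!\left(\lfloor\frac{n-1}{2}\rfloor,\,q-1\right)=1$.
   Context: For an integer $n\ge 1$, the $n$-th reversed Dickson polynomial of the third kind is $F_n(a,x)=\sum_{i=0}^{\lfloor n/2\rfloor}\frac{n-2i}{n-i}\binom{n-i}{i}(-x)^i a^{n-2i}$, where each coefficient $\frac{n-2i}{n-i}\binom{n-i}{i}$ is an integer (read in $\mathbb{F}_q$), and $F_0(a,x)=0$. A polynomial $f\in\mathbb{F}_q[x]$ is a permutation polynomial of $\mathbb{F}_q$ if $c\mapsto f(c)$ is a bijection of $\mathbb{F}_q$. *)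

theory Defs
  imports "HOL-Computational_Algebra.Polynomial" "HOL-Computational_Algebra.Primes"
begin

text \<open>Integer coefficient ((n-2i)/(n-i)) * binom(n-i, i) of the reversed Dickson
  polynomial of the third kind (exact division, valid for n \<ge> 1, 2i \<le> n).\<close>
definition rd3_coeff :: "nat \<Rightarrow> nat \<Rightarrow> nat" where
  "rd3_coeff n i = ((n - 2 * i) * ((n - i) choose i)) div (n - i)"

definition rev_dickson3 :: "nat \<Rightarrow> 'a::comm_ring_1 \<Rightarrow> 'a poly" where
  "rev_dickson3 n a =
     (if n = 0 then 0
      else (\<Sum>i\<le>n div 2. smult (of_nat (rd3_coeff n i) * a ^ (n - 2 * i)) ([:0, -1:] ^ i)))"

definition permutation_poly :: "'a::{comm_semiring_0,finite} poly \<Rightarrow> bool" where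
  "permutation_poly f \<longleftrightarrow> bij (poly f)"

end

theory Submission
  imports Defs
begin


fun AB :: "nat \<Rightarrow> 'a::comm_ring_1 \<Rightarrow> 'a \<times> 'a" where
  "AB 0 w = (1, 0)"
| "AB (Suc k) w = (fst (AB k w) + w * snd (AB k w), fst (AB k w) + snd (AB k w))"

fun EE :: "nat \<Rightarrow> 'a::comm_ring_1 \<Rightarrow> 'a" where
  "EE 0 x = 1" | "EE (Suc 0) x = 1" | "EE (Suc (Suc k)) x = EE (Suc k) x - x * EE k x"

definition SS :: "nat \<Rightarrow> 'a::comm_ring_1 \<Rightarrow> 'a" where
  "SS k x = (\<Sum>i\<le>k. of_nat ((k - i) choose i) * (-x) ^ i)"

lemma SS_rec: "SS (Suc (Suc k)) x = SS (Suc k) x - x * SS k x"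
proof -
  have fs: "of_nat ((Suc (Suc k) - Suc j) choose Suc j) * (-x) ^ Suc j
      = of_nat ((k - j) choose j) * (-x) ^ Suc j + of_nat ((k - j) choose Suc j) * (-x) ^ Suc j"
    for j :: nat
  proof (cases "j \<le> k")
    case True
    then have "Suc (Suc k) - Suc j = Suc (k - j)" by simp
    then show ?thesis by (simp add: distrib_right)
  next
    case False
    then show ?thesis by (cases j) auto
  qed
  have "SS (Suc (Suc k)) x = 1 + (\<Sum>j\<le>Suc k. of_nat ((Suc (Suc k) - Suc j) choose Suc j) * (-x) ^ Suc j)"
    unfolding SS_def by (subst sum.atMost_Suc_shift) simp
  also have "\<dots> = 1 + (\<Sum>j\<le>Suc k. of_nat ((k - j) choose j) * (-x) ^ Suc j)
       + (\<Sum>j\<le>Suc k. of_nat ((k - j) choose Suc j) * (-x) ^ Suc j)"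
    unfolding fs sum.distrib by (simp only: add.assoc)
  moreover have "(\<Sum>j\<le>Suc k. of_nat ((k - j) choose j) * (-x) ^ Suc j) = - x * SS k x"
    unfolding SS_def by (simp add: sum_distrib_left mult_ac)
  moreover have "1 + (\<Sum>j\<le>Suc k. of_nat ((k - j) choose Suc j) * (-x) ^ Suc j) = SS (Suc k) x"
    unfolding SS_def by (subst (2) sum.atMost_Suc_shift) simp
  ultimately show ?thesis by (simp add: algebra_simps)
qed

lemma SS_EE: "SS k x = EE k x \<and> SS (Suc k) x = EE (Suc k) x"
proof (induction k)
  case 0 then show ?case by (simp add: SS_def)
next
  case (Suc k) then show ?case by (simp add: SS_rec)
qed

lemma rd3_coeff_eq:
  assumes "n \<ge> 1" "i \<le> n div 2"
  shows "rd3_coeff n i = (n - 1 - i) choose i"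
proof -
  define a where "a = n - i"
  have a: "a > 0" "n - 2 * i = a - i" "n - 1 - i = a - 1" using assms unfolding a_def by auto
  have "(a - i) * (a choose i) = a * ((a - 1) choose i)" by (rule binomial_absorb_comp)
  then show ?thesis unfolding rd3_coeff_def a_def[symmetric] a using a(1) by simp
qed

lemma poly_rd3:
  assumes "n \<ge> 1"
  shows "poly (rev_dickson3 n (1::'a::comm_ring_1)) x = EE (n - 1) x"
proof -
  have "poly (rev_dickson3 n (1::'a)) x = (\<Sum>i\<le>n div 2. of_nat ((n - 1 - i) choose i) * (-x) ^ i)"
    using assms unfolding rev_dickson3_def
    by (simp add: poly_sum rd3_coeff_eq)
  also have "\<dots> = SS (n - 1) x"
    unfolding SS_def
  proof (rule sum.mono_neutral_left)
    show "{..n div 2} \<subseteq> {..n - 1}" using assms by auto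
    show "\<forall>i\<in>{..n - 1} - {..n div 2}. of_nat ((n - 1 - i) choose i) * (- x) ^ i = (0::'a)"
    proof
      fix i assume "i \<in> {..n - 1} - {..n div 2}"
      then have "n - 1 - i < i" by auto
      then show "of_nat ((n - 1 - i) choose i) * (- x) ^ i = (0::'a)" by (simp add: binomial_eq_0)
    qed
  qed auto
  finally show ?thesis using SS_EE[of "n - 1" x] by simp
qed

lemma AB_rec2: "snd (AB (Suc (Suc k)) w) = 2 * snd (AB (Suc k) w) - (1 - w) * snd (AB k w)"
  by (simp add: algebra_simps)

lemma EE_AB: "2 ^ k * EE k x = snd (AB (Suc k) (1 - 4 * x)) \<and>
   2 ^ Suc k * EE (Suc k) x = snd (AB (Suc (Suc k)) (1 - 4 * x))"
proof (induction k)
  case 0 then show ?case by simp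
next
  case (Suc k)
  define w where "w = 1 - 4 * x"
  have "2 ^ Suc (Suc k) * EE (Suc (Suc k)) x = 2 * (2 ^ Suc k * EE (Suc k) x) - (1 - w) * (2 ^ k * EE k x)"
    by (simp add: w_def algebra_simps)
  also have "\<dots> = snd (AB (Suc (Suc (Suc k))) w)"
    using Suc.IH AB_rec2[of "Suc k" w] unfolding w_def by simp
  finally show ?case using Suc.IH unfolding w_def by simp
qed


lemma AB_0: "AB k (0::'a::comm_ring_1) = (1, of_nat k)"
  by (induction k) auto

lemma AB_1: "AB (Suc k) (1::'a::comm_ring_1) = (2 ^ k, 2 ^ k)"
  by (induction k) auto

lemma AB_m1_step: "AB (Suc (Suc (Suc (Suc k)))) (-1::'a::comm_ring_1)
   = (-4 * fst (AB k (-1)), -4 * snd (AB k (-1)))"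
  by (simp add: algebra_simps)

lemma AB_m1: "AB (4 * j) (-1::'a::comm_ring_1) = ((-4) ^ j, 0) \<and>
  AB (4 * j + 2) (-1::'a) = (0, 2 * (-4) ^ j)"
proof (induction j)
  case 0 then show ?case by (simp add: numeral_eq_Suc)
next
  case (Suc j)
  have "4 * Suc j = Suc (Suc (Suc (Suc (4 * j))))" "4 * Suc j + 2 = Suc (Suc (Suc (Suc (4 * j + 2))))"
    by simp_all
  then show ?case using Suc.IH by (simp only: AB_m1_step) simp
qed

lemma AB_sym:
  fixes w :: "'a::field"
  assumes "w \<noteq> 0"
  shows "w ^ l * fst (AB (2 * l) (inverse w)) = fst (AB (2 * l) w) \<and>
         w ^ l * snd (AB (2 * l) (inverse w)) = w * snd (AB (2 * l) w) \<and>
         w ^ l * fst (AB (Suc (2 * l)) (inverse w)) = snd (AB (Suc (2 * l)) w) \<and>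
         w ^ l * snd (AB (Suc (2 * l)) (inverse w)) = fst (AB (Suc (2 * l)) w)"
proof (induction l)
  case 0 then show ?case by simp
next
  case (Suc l)
  define a where "a = fst (AB (2 * l) w)"
  define b where "b = snd (AB (2 * l) w)"
  define v where "v = inverse w"
  define a' where "a' = fst (AB (2 * l) v)"
  define b' where "b' = snd (AB (2 * l) v)"
  have IH: "w ^ l * a' = a" "w ^ l * b' = w * b" using Suc.IH unfolding a_def b_def a'_def b'_def v_def by auto
  have e: "2 * Suc l = Suc (Suc (2 * l))" by simp
  have wi: "w * inverse w = 1" using assms by simp
  define P where "P = w ^ l"
  have Pnz: "P \<noteq> 0" using assms unfolding P_def by simp
  have IH': "a' = a / P" "b' = w * b / P" "v = 1 / w" using IH Pnz unfolding P_def v_def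
    by (auto simp: field_simps)
  have g1: "w * P * (a' + v * b' + v * (a' + b')) = a + w * b + w * (a + b)"
    using Pnz assms unfolding IH' by (simp add: field_simps)
  have g2: "w * P * (a' + v * b' + (a' + b')) = w * (a + w * b + (a + b))"
    using Pnz assms unfolding IH' by (simp add: field_simps)
  have g3: "w * P * ((a' + v * b' + v * (a' + b')) + v * (a' + v * b' + (a' + b'))) =
     (a + w * b + w * (a + b)) + (a + w * b + (a + b))"
    using Pnz assms unfolding IH' by (simp add: field_simps)
  have g4: "w * P * ((a' + v * b' + v * (a' + b')) + (a' + v * b' + (a' + b'))) =
     (a + w * b + w * (a + b)) + w * (a + w * b + (a + b))"
    using Pnz assms unfolding IH' by (simp add: field_simps)
  show ?case unfolding e AB.simps fst_conv snd_conv a_def[symmetric] b_def[symmetric]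
      v_def[symmetric] a'_def[symmetric] b'_def[symmetric] power_Suc P_def[symmetric]
    using g1 g2 g3 g4 by (intro conjI)
qed

lemma fermat_field:
  fixes x :: "'a :: {field,finite}"
  assumes "x \<noteq> 0"
  shows "x ^ (card (UNIV :: 'a set) - 1) = 1"
proof -
  have "x * (\<Prod>y\<in>UNIV-{0}. x * y) = x * x ^ (card (UNIV :: 'a set) - 1) * \<Prod>(UNIV-{0})"
    by (simp add: prod.distrib mult_ac)
  moreover have "(\<Prod>y\<in>UNIV-{0}. x * y) = (\<Prod>y\<in>UNIV-{0}. y)"
    by (rule prod.reindex_bij_witness[of _ "\<lambda>y. y / x" "\<lambda>y. x * y"]) (use assms in auto)
  moreover have "\<Prod>(UNIV-{0::'a}) \<noteq> 0" by (simp add: prod_zero_iff)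
  ultimately show ?thesis using assms by simp
qed


lemma exists_root_unity:
  fixes q d :: nat
  assumes q: "card (UNIV::'a::{field,finite} set) = q" and d: "d \<ge> 2" "d dvd q - 1"
  shows "\<exists>w::'a. w ^ d = 1 \<and> w \<noteq> 1"
proof (rule ccontr)
  assume H: "\<not> ?thesis"
  have q2: "q \<ge> 2"
  proof -
    have "{0::'a, 1} \<subseteq> UNIV" by simp
    then have "card {0::'a, 1} \<le> card (UNIV::'a set)" by (intro card_mono) auto
    then show ?thesis using q by simp
  qed
  obtain k where k: "q - 1 = d * k" using d by (auto elim: dvdE)
  have kpos: "k \<ge> 1" using k q2 by (cases k) auto
  define h :: "'a poly" where "h = (\<Sum>j<k. monom 1 (d * j))"
  have ph: "poly h w = (\<Sum>j<k. (w ^ d) ^ j)" for w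
    unfolding h_def by (simp add: poly_sum poly_monom power_mult)
  have "poly h 0 = 1"
  proof -
    have "poly h 0 = (\<Sum>j<k. if j = 0 then 1 else (0::'a))"
      unfolding ph using d by (intro sum.cong) (auto simp: power_0_left)
    also have "\<dots> = 1" using kpos by simp
    finally show ?thesis .
  qed
  then have hnz: "h \<noteq> 0" by auto
  have degh: "degree h \<le> d * (k - 1)"
    unfolding h_def
    proof (rule degree_sum_le)
    fix j assume "j \<in> {..<k}"
    then have "d * j \<le> d * (k - 1)" by (intro mult_le_mono2) auto
    then show "degree (monom (1::'a) (d * j)) \<le> d * (k - 1)"
      using degree_monom_le[of "1::'a" "d * j"] by linarith
  qed simp
  have sub: "UNIV - {0, 1} \<subseteq> {w::'a. poly h w = 0}"
  proof
    fix w :: 'a assume w: "w \<in> UNIV - {0, 1}"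
    then have "w ^ d \<noteq> 1" using H by auto
    moreover have "(w ^ d - 1) * poly h w = 0"
    proof -
      have "(w ^ d - 1) * poly h w = (w ^ d) ^ k - 1"
        unfolding ph by (simp add: power_diff_1_eq)
      also have "\<dots> = w ^ (q - 1) - 1" unfolding k by (simp add: power_mult)
      also have "\<dots> = 0" using fermat_field[of w] q w by simp
      finally show ?thesis .
    qed
    ultimately show "w \<in> {w. poly h w = 0}" by simp
  qed
  have "card (UNIV - {0::'a, 1}) \<le> card {w::'a. poly h w = 0}"
    by (rule card_mono[OF _ sub]) simp
  also have "\<dots> \<le> degree h" by (rule card_poly_roots_bound[OF hnz])
  finally have "q - 2 \<le> d * (k - 1)" using degh q by (simp add: card_Diff_subset)
  moreover have "d \<le> d * k" using kpos by simp
  moreover have "d * (k - 1) = d * k - d" by (simp add: diff_mult_distrib2)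
  ultimately show False using k d q2 by linarith
qed


lemma sq_one: "(w::'a::field) * w = 1 \<Longrightarrow> w = 1 \<or> w = -1"
proof -
  assume "w * w = 1"
  then have "(w - 1) * (w + 1) = 0" by (simp add: algebra_simps)
  then show ?thesis by (auto simp: eq_neg_iff_add_eq_0)
qed

theorem theorem3p3:
  fixes p q n :: nat
  assumes "prime p" and "odd p"
    and "CHAR('a::{field,finite}) = p"
    and "card (UNIV :: 'a set) = q"
    and "even n" and "\<not> p dvd n"
    and "permutation_poly (rev_dickson3 n (1::'a))"
  shows "n mod 4 = 0 \<and> gcd ((n - 1) div 2) (q - 1) = 1"
proof -
  define F where "F x = poly (rev_dickson3 n (1::'a)) x" for x
  have bij: "bij F" using assms(7) unfolding permutation_poly_def F_def[abs_def] by simp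
  have p3: "p \<ge> 3" using assms(1,2) prime_ge_2_nat[of p] by (cases "p = 2") auto
  have two: "(2::'a) \<noteq> 0"
  proof
    assume "(2::'a) = 0"
    then have "of_nat 2 = (0::'a)" by simp
    then have "p dvd 2" using of_nat_eq_0_iff_char_dvd[where 'a='a, of 2] assms(3) by simp
    then show False using p3 dvd_imp_le[of p 2] by simp
  qed
  have four: "(4::'a) \<noteq> 0"
  proof -
    have "(4::'a) = 2 * 2" by simp
    then show ?thesis using two by (metis no_zero_divisors)
  qed
  have n0: "n \<noteq> 0" using assms(6) by (metis dvd_0_right)
  obtain m where nm: "n = 2 * m" using assms(5) by (auto elim: evenE)
  have m1: "m \<ge> 1" using n0 nm by simp
  define B where "B w = snd (AB n w)" for w :: 'a
  have FB: "2 ^ (n - 1) * F x = B (1 - 4 * x)" for x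
  proof -
    have "F x = EE (n - 1) x" unfolding F_def using n0 by (simp add: poly_rd3)
    moreover have "Suc (n - 1) = n" using n0 by simp
    ultimately show ?thesis unfolding B_def using EE_AB[of "n - 1" x] by metis
  qed
  have injB: "inj B"
  proof (rule injI)
    fix w1 w2 assume eq: "B w1 = B w2"
    define x1 where "x1 = (1 - w1) / 4"
    define x2 where "x2 = (1 - w2) / 4"
    have e1: "1 - 4 * x1 = w1" "1 - 4 * x2 = w2" using four unfolding x1_def x2_def by (simp_all add: field_simps)
    have "2 ^ (n - 1) * F x1 = 2 ^ (n - 1) * F x2" using FB[of x1] FB[of x2] e1 eq by simp
    then have "F x1 = F x2" using two by simp
    then have "x1 = x2" using bij by (auto dest: bij_is_inj injD)
    then show "w1 = w2" using e1 by simp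
  qed
  obtain x0 where x0: "F x0 = 0" using bij by (metis bij_pointE)
  define w0 where "w0 = 1 - 4 * x0"
  have Bw0: "B w0 = 0" using FB[of x0] x0 unfolding w0_def by simp
  have B0: "B 0 \<noteq> 0"
  proof
    assume "B 0 = 0"
    then have "of_nat n = (0::'a)" unfolding B_def by (simp add: AB_0)
    then show False using of_nat_eq_0_iff_char_dvd[where 'a='a, of n] assms(3,6) by simp
  qed
  have B1: "B 1 \<noteq> 0"
  proof -
    have "Suc (n - 1) = n" using n0 by simp
    then have "B 1 = 2 ^ (n - 1)" unfolding B_def using AB_1[of "n - 1"] by (metis snd_conv)
    then show ?thesis using two by simp
  qed
  have sym: "w ^ m * B (inverse w) = w * B w" if "w \<noteq> 0" for w
    using AB_sym[OF that, of m] unfolding B_def nm by simp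
  have w0nz: "w0 \<noteq> 0" using Bw0 B0 by auto
  have "w0 ^ m * B (inverse w0) = 0" using sym[OF w0nz] Bw0 by simp
  then have "B (inverse w0) = B w0" using w0nz Bw0 by simp
  then have "inverse w0 = w0" using injB by (simp add: inj_eq)
  then have "w0 * w0 = 1" using w0nz by (metis right_inverse)
  then have "w0 = 1 \<or> w0 = -1" by (rule sq_one)
  then have Bm1: "B (-1) = 0" using Bw0 B1 by auto
  have meven: "even m"
  proof (rule ccontr)
    assume "odd m"
    then obtain j where "m = 2 * j + 1" by (auto elim: oddE)
    then have "n = 4 * j + 2" using nm by simp
    then have "B (-1) = 2 * (-4) ^ j" unfolding B_def using AB_m1[where 'a='a, of j] by simp
    moreover have "(-4::'a) ^ j \<noteq> 0" using four by simp
    ultimately show False using Bm1 two by simp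
  qed
  have part1: "n mod 4 = 0" using meven nm by (auto elim!: evenE)
  have nd: "(n - 1) div 2 = m - 1" using nm m1 by simp
  have mm1odd: "odd (m - 1)" using meven m1 by simp
  have part2: "gcd (m - 1) (q - 1) = 1"
  proof (rule ccontr)
    define d where "d = gcd (m - 1) (q - 1)"
    assume "gcd (m - 1) (q - 1) \<noteq> 1"
    then have d1: "d \<noteq> 1" unfolding d_def .
    have "d \<noteq> 0" unfolding d_def using mm1odd by (auto simp: gcd_eq_0_iff)
    then have d2: "d \<ge> 2" using d1 by simp
    obtain w :: 'a where w: "w ^ d = 1" "w \<noteq> 1"
      using exists_root_unity[OF assms(4) d2] unfolding d_def by auto
    have dd: "d dvd m - 1" unfolding d_def by simp
    then obtain t where t: "m - 1 = d * t" by (auto elim: dvdE)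
    have wm1: "w ^ (m - 1) = 1" unfolding t power_mult w by simp
    have wnz: "w \<noteq> 0" using w \<open>d \<noteq> 0\<close> by (auto simp: power_0_left)
    have "w ^ m = w * w ^ (m - 1)" using m1 by (cases m) auto
    then have wm: "w ^ m = w" using wm1 by simp
    have "B (inverse w) = B w" using sym[OF wnz] wm wnz by simp
    then have "inverse w = w" using injB by (simp add: inj_eq)
    then have "w * w = 1" using wnz by (metis right_inverse)
    then have "w = -1" using sq_one w(2) by blast
    moreover have "odd d" using dd mm1odd by (auto dest: dvd_trans)
    ultimately have "(-1::'a) = 1" using w(1) by simp
    then have "(1::'a) + 1 = 0" by (metis add.right_inverse)
    then have "(2::'a) = 0" by simp
    then show False using two by simp
  qed
  show ?thesis using part1 part2 nd by simp
qed

end
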